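(* Let $e\colon\mathbb{G}_1\times\mathbb{G}_1\to\mathbb{G}_2$ be a cryptographic pairing between groups of order $p$. Suppose the $(t,\epsilon)$-Computational Diffie-Hellman assumption holds in $\mathbb{G}_1$. Then $e$ is a $(t-O(1),\epsilon)$-one-way pairing.
   Context: A cryptographic pairing is a map $e\colon\mathbb{G}_1\times\mathbb{G}_1\to\mathbb{G}_2$ between cyclic groups of prime order $p$ that is bilinear ($e(x^a,y^b)=e(x,y)^{ab}$) and non-degenerate ($e(g,g)$ generates $\mathbb{G}_2$ whenever $g$ generates $\mathbb{G}_1$). The $(t,\epsilon)$-CDH assumption holds in $\mathbb{G}_1$ if there is no algorithm running in time at most $t$ that on input $(g,g^a,g^b)$ outputs $g^{ab}$ with probability at least $\epsilon$ over all choices of $(g,a,b)$. The pairing $e$ is a $(t,\epsilon)$-one-way pairing if for every algorithm $\mathcal{A}$ that takes as input $g\in\mathbb{G}_1$ and $x\in\mathbb{G}_2$, outputs an element of $\mathbb{G}_1$, and runs in time at most $t$, one has $\Pr[e(g,\mathcal{A}(g,x))=x]<\epsilon$, the probability over $g$ and $x$. *)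

theory Defs
  imports "HOL-Algebra.Generated_Groups" "HOL-Probability.Product_PMF"
begin

definition generators :: "('a, 'c) monoid_scheme \<Rightarrow> 'a set" where
  "generators G = {g \<in> carrier G. generate G {g} = carrier G}"

definition cyclic_of_prime_order :: "('a, 'c) monoid_scheme \<Rightarrow> nat \<Rightarrow> bool" where
  "cyclic_of_prime_order G p \<longleftrightarrow>
     group G \<and> prime p \<and> finite (carrier G) \<and> card (carrier G) = p \<and> generators G \<noteq> {}"

definition cryptographic_pairing ::
  "('a, 'c) monoid_scheme \<Rightarrow> ('b, 'd) monoid_scheme \<Rightarrow> nat \<Rightarrow> ('a \<Rightarrow> 'a \<Rightarrow> 'b) \<Rightarrow> bool" where
  "cryptographic_pairing G1 G2 p e \<longleftrightarrow>
     cyclic_of_prime_order G1 p \<and> cyclic_of_prime_order G2 p \<and>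
     (\<forall>x \<in> carrier G1. \<forall>y \<in> carrier G1. e x y \<in> carrier G2) \<and>
     (\<forall>x \<in> carrier G1. \<forall>y \<in> carrier G1. \<forall>a b :: nat.
         e (x [^]\<^bsub>G1\<^esub> a) (y [^]\<^bsub>G1\<^esub> b) = (e x y) [^]\<^bsub>G2\<^esub> (a * b)) \<and>
     (\<forall>g \<in> generators G1. e g g \<in> generators G2)"

text \<open>Adversaries are randomized algorithms, modelled by their output distributions.
  CDH adversary: input (g, g^a, g^b), output an element. One-way adversary: input (g, x).\<close>

type_synonym ('a) cdh_adversary = "'a \<Rightarrow> 'a \<Rightarrow> 'a \<Rightarrow> 'a pmf"
type_synonym ('a, 'b) ow_adversary = "'a \<Rightarrow> 'b \<Rightarrow> 'a pmf"

definition cdh_success :: "('a, 'c) monoid_scheme \<Rightarrow> nat \<Rightarrow> 'a cdh_adversary \<Rightarrow> real" where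
  "cdh_success G p A =
     measure_pmf.prob
       (bind_pmf (pmf_of_set (generators G)) (\<lambda>g.
        bind_pmf (pmf_of_set {..<p}) (\<lambda>a.
        bind_pmf (pmf_of_set {..<p}) (\<lambda>b.
        map_pmf (\<lambda>z. z = g [^]\<^bsub>G\<^esub> (a * b)) (A g (g [^]\<^bsub>G\<^esub> a) (g [^]\<^bsub>G\<^esub> b))))))
       {True}"

definition ow_success ::
  "('a, 'c) monoid_scheme \<Rightarrow> ('b, 'd) monoid_scheme \<Rightarrow> ('a \<Rightarrow> 'a \<Rightarrow> 'b) \<Rightarrow> ('a, 'b) ow_adversary \<Rightarrow> real" where
  "ow_success G1 G2 e A =
     measure_pmf.prob
       (bind_pmf (pmf_of_set (generators G1)) (\<lambda>g.
        bind_pmf (pmf_of_set (carrier G2)) (\<lambda>x.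
        map_pmf (\<lambda>y. e g y = x) (A g x))))
       {True}"

definition ow_valid :: "('a, 'c) monoid_scheme \<Rightarrow> ('b, 'd) monoid_scheme \<Rightarrow> ('a, 'b) ow_adversary \<Rightarrow> bool" where
  "ow_valid G1 G2 A \<longleftrightarrow>
     (\<forall>g \<in> carrier G1. \<forall>x \<in> carrier G2. set_pmf (A g x) \<subseteq> carrier G1)"

text \<open>time_cdh A / time_ow A is the running time of (the best implementation of) the
  algorithm A in some fixed computational model.\<close>

definition cdh_assumption ::
  "('a, 'c) monoid_scheme \<Rightarrow> nat \<Rightarrow> ('a cdh_adversary \<Rightarrow> real) \<Rightarrow> real \<Rightarrow> real \<Rightarrow> bool" where
  "cdh_assumption G p time_cdh t \<epsilon> \<longleftrightarrow>
     (\<forall>A. time_cdh A \<le> t \<longrightarrow> cdh_success G p A < \<epsilon>)"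

definition one_way_pairing ::
  "('a, 'c) monoid_scheme \<Rightarrow> ('b, 'd) monoid_scheme \<Rightarrow> ('a \<Rightarrow> 'a \<Rightarrow> 'b)
     \<Rightarrow> (('a, 'b) ow_adversary \<Rightarrow> real) \<Rightarrow> real \<Rightarrow> real \<Rightarrow> bool" where
  "one_way_pairing G1 G2 e time_ow t \<epsilon> \<longleftrightarrow>
     (\<forall>A. ow_valid G1 G2 A \<longrightarrow> time_ow A \<le> t \<longrightarrow> ow_success G1 G2 e A < \<epsilon>)"

text \<open>Straight-line expressions over G1 and G2. V1 i refers to the i-th entry of the
  environment; Pow1 e j raises to the j-th random exponent.\<close>
datatype g1expr = V1 nat | One1 | Mul1 g1expr g1expr | Inv1 g1expr | Pow1 g1expr nat

datatype g2expr = Pair g1expr g1expr | One2 | Mul2 g2expr g2expr | Inv2 g2expr | Pow2 g2expr nat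

primrec eval1 :: "('a, 'c) monoid_scheme \<Rightarrow> 'a list \<Rightarrow> (nat \<Rightarrow> nat) \<Rightarrow> g1expr \<Rightarrow> 'a" where
  "eval1 G env r (V1 i) = (if i < length env then env ! i else \<one>\<^bsub>G\<^esub>)"
| "eval1 G env r One1 = \<one>\<^bsub>G\<^esub>"
| "eval1 G env r (Mul1 x y) = eval1 G env r x \<otimes>\<^bsub>G\<^esub> eval1 G env r y"
| "eval1 G env r (Inv1 x) = inv\<^bsub>G\<^esub> (eval1 G env r x)"
| "eval1 G env r (Pow1 x j) = eval1 G env r x [^]\<^bsub>G\<^esub> r j"

primrec eval2 :: "('a, 'c) monoid_scheme \<Rightarrow> ('b, 'd) monoid_scheme \<Rightarrow> ('a \<Rightarrow> 'a \<Rightarrow> 'b)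
    \<Rightarrow> 'a list \<Rightarrow> (nat \<Rightarrow> nat) \<Rightarrow> g2expr \<Rightarrow> 'b" where
  "eval2 G1 G2 e env r (Pair x y) = e (eval1 G1 env r x) (eval1 G1 env r y)"
| "eval2 G1 G2 e env r One2 = \<one>\<^bsub>G2\<^esub>"
| "eval2 G1 G2 e env r (Mul2 x y) = eval2 G1 G2 e env r x \<otimes>\<^bsub>G2\<^esub> eval2 G1 G2 e env r y"
| "eval2 G1 G2 e env r (Inv2 x) = inv\<^bsub>G2\<^esub> (eval2 G1 G2 e env r x)"
| "eval2 G1 G2 e env r (Pow2 x j) = eval2 G1 G2 e env r x [^]\<^bsub>G2\<^esub> r j"

text \<open>A wrapper (k, pre_g, pre_x, post) turns a one-way adversary A into a CDH adversary:
  on input (g,u,v) sample k exponents r_0..r_{k-1} uniformly from Z_p, run A on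
  (pre_g, pre_x) evaluated in environment [g,u,v], obtaining y, and output post evaluated in
  environment [g,u,v,y]. It uses a single call to A plus a fixed amount of group work.\<close>
type_synonym wrapper = "nat \<times> g1expr \<times> g2expr \<times> g1expr"

definition apply_wrapper ::
  "('a, 'c) monoid_scheme \<Rightarrow> ('b, 'd) monoid_scheme \<Rightarrow> nat \<Rightarrow> ('a \<Rightarrow> 'a \<Rightarrow> 'b)
     \<Rightarrow> wrapper \<Rightarrow> ('a, 'b) ow_adversary \<Rightarrow> 'a cdh_adversary" where
  "apply_wrapper G1 G2 p e W A = (case W of (k, pg, px, po) \<Rightarrow>
     (\<lambda>g u v.
        bind_pmf (Pi_pmf {..<k} 0 (\<lambda>_. pmf_of_set {..<p})) (\<lambda>r.
        map_pmf (\<lambda>y. eval1 G1 [g, u, v, y] r po)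
          (A (eval1 G1 [g, u, v] r pg) (eval2 G1 G2 e [g, u, v] r px)))))"

text \<open>Standing assumption on the computational model: each fixed wrapper adds at most a
  constant to the running time (one call to the adversary plus O(1) group operations,
  pairing evaluations and samplings).\<close>
definition wrapper_overhead_bounded ::
  "('a, 'c) monoid_scheme \<Rightarrow> ('b, 'd) monoid_scheme \<Rightarrow> nat \<Rightarrow> ('a \<Rightarrow> 'a \<Rightarrow> 'b)
     \<Rightarrow> ('a cdh_adversary \<Rightarrow> real) \<Rightarrow> (('a, 'b) ow_adversary \<Rightarrow> real) \<Rightarrow> bool" where
  "wrapper_overhead_bounded G1 G2 p e time_cdh time_ow \<longleftrightarrow>
     (\<forall>W :: wrapper. \<exists>c :: real. \<forall>A.
        time_cdh (apply_wrapper G1 G2 p e W A) \<le> time_ow A + c)"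

end

theory Submission
  imports Defs "HOL-Algebra.Multiplicative_Group"
begin

lemma pow_mod_ord:
  fixes G :: "('g, 'h) monoid_scheme" (structure)
  assumes "group G" "x \<in> carrier G"
  shows "x [^]\<^bsub>G\<^esub> (m::nat) = x [^]\<^bsub>G\<^esub> (m mod group.ord G x)"
proof -
  interpret group G by fact
  have "x [^] m = x [^] (ord x * (m div ord x)) \<otimes> x [^] (m mod ord x)"
    using assms(2) by (simp add: nat_pow_mult)
  also have "x [^] (ord x * (m div ord x)) = \<one>"
    using assms(2) by (simp add: nat_pow_pow[symmetric])
  finally show ?thesis using assms(2) by simp
qed

lemma pow_eq_iff_mod:
  fixes G :: "('g, 'h) monoid_scheme" (structure)
  assumes "group G" "x \<in> carrier G" "group.ord G x > 0"
  shows "(x [^]\<^bsub>G\<^esub> (m::nat) = x [^]\<^bsub>G\<^esub> (n::nat)) \<longleftrightarrow> m mod group.ord G x = n mod group.ord G x"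
proof -
  interpret group G by fact
  have inj: "inj_on (\<lambda>k. x [^] k) {0..ord x - 1}" by (rule ord_inj[OF assms(2)])
  have "m mod ord x \<in> {0..ord x - 1}" "n mod ord x \<in> {0..ord x - 1}" using assms(3)
    by (auto simp: less_Suc_eq_le[symmetric])
  then show ?thesis using pow_mod_ord[OF assms(1,2), of m] pow_mod_ord[OF assms(1,2), of n] inj
    unfolding inj_on_def by metis
qed

lemma gen_ord:
  assumes "cyclic_of_prime_order G p" "g \<in> generators G"
  shows "group.ord G g = p" "g \<in> carrier G" "group G" "p > 0"
proof -
  show "group G" "g \<in> carrier G" "p > 0" using assms
    by (auto simp: cyclic_of_prime_order_def generators_def prime_gt_0_nat)
  then interpret group G by simp
  show "ord g = p" using assms generate_pow_card[of g]
    by (auto simp: cyclic_of_prime_order_def generators_def)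
qed

lemma gen_elem:
  assumes "cyclic_of_prime_order G p" "g \<in> generators G" "y \<in> carrier G"
  shows "\<exists>k::nat. y = g [^]\<^bsub>G\<^esub> k"
proof -
  interpret group G using gen_ord[OF assms(1,2)] by simp
  have "generate G {g} = carrier G" using assms by (auto simp: generators_def)
  then show ?thesis using generate_pow_on_finite_carrier[of g] assms
    by (auto simp: cyclic_of_prime_order_def generators_def)
qed

definition theW :: wrapper where
  "theW = (1, V1 0, Mul2 (Pair (V1 1) (V1 2)) (Pow2 (Pair (V1 0) (V1 0)) 0),
           Mul1 (V1 3) (Inv1 (Pow1 (V1 0) 0)))"

lemma Pi_bind1:
  "bind_pmf (Pi_pmf {..<Suc 0} (0::nat) (\<lambda>_. U)) (\<lambda>r. F (r 0)) = bind_pmf U F"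
proof -
  have "bind_pmf U F = bind_pmf (map_pmf (\<lambda>r. r 0) (Pi_pmf {..<Suc 0} (0::nat) (\<lambda>_. U))) F"
    using Pi_pmf_component[of "{..<Suc 0}" 0 0 "\<lambda>_. U"] by simp
  then show ?thesis by (simp add: bind_map_pmf)
qed

lemma success_eq:
  fixes G1 :: "'a monoid" and G2 :: "'b monoid"
  assumes cp: "cryptographic_pairing G1 G2 p e" and v: "ow_valid G1 G2 A"
  shows "cdh_success G1 p (apply_wrapper G1 G2 p e theW A) = ow_success G1 G2 e A"
proof -
  have c1: "cyclic_of_prime_order G1 p" and c2: "cyclic_of_prime_order G2 p"
    and ec: "\<And>x y. x \<in> carrier G1 \<Longrightarrow> y \<in> carrier G1 \<Longrightarrow> e x y \<in> carrier G2"
    and bil: "\<And>x y a b. x \<in> carrier G1 \<Longrightarrow> y \<in> carrier G1 \<Longrightarrow>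
         e (x [^]\<^bsub>G1\<^esub> (a::nat)) (y [^]\<^bsub>G1\<^esub> (b::nat)) = (e x y) [^]\<^bsub>G2\<^esub> (a * b)"
    and ng: "\<And>g. g \<in> generators G1 \<Longrightarrow> e g g \<in> generators G2"
    using cp unfolding cryptographic_pairing_def by auto
  interpret g1: group G1 using c1 by (simp add: cyclic_of_prime_order_def)
  interpret g2: group G2 using c2 by (simp add: cyclic_of_prime_order_def)
  have p0: "p > 0" using c1 by (simp add: cyclic_of_prime_order_def prime_gt_0_nat)
  have fin2: "finite (carrier G2)" "card (carrier G2) = p" using c2 by (auto simp: cyclic_of_prime_order_def)
  have key: "bind_pmf (pmf_of_set {..<p}) (\<lambda>a. bind_pmf (pmf_of_set {..<p}) (\<lambda>b.
        map_pmf (\<lambda>z. z = g [^]\<^bsub>G1\<^esub> (a * b))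
          (apply_wrapper G1 G2 p e theW A g (g [^]\<^bsub>G1\<^esub> a) (g [^]\<^bsub>G1\<^esub> b))))
      = bind_pmf (pmf_of_set (carrier G2)) (\<lambda>x. map_pmf (\<lambda>y. e g y = x) (A g x))"
    if g: "g \<in> generators G1" for g
  proof -
    define h where "h = e g g"
    have gc: "g \<in> carrier G1" and og: "g1.ord g = p" using gen_ord[OF c1 g] by auto
    have hgen: "h \<in> generators G2" using ng[OF g] h_def by simp
    have hc: "h \<in> carrier G2" and oh: "g2.ord h = p" using gen_ord[OF c2 hgen] by auto
    have g1': "g [^]\<^bsub>G1\<^esub> (1::nat) = g" using gc by simp
    have eg: "e g (g [^]\<^bsub>G1\<^esub> (k::nat)) = h [^]\<^bsub>G2\<^esub> k" for k
      using bil[OF gc gc, of 1 k] g1' h_def by simp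
    have unif: "map_pmf (\<lambda>r. h [^]\<^bsub>G2\<^esub> (c + r)) (pmf_of_set {..<p}) = pmf_of_set (carrier G2)" for c :: nat
    proof -
      have inj: "inj_on (\<lambda>r. h [^]\<^bsub>G2\<^esub> (c + r)) {..<p}"
      proof (rule inj_onI)
        fix x y assume "x \<in> {..<p}" "y \<in> {..<p}" "h [^]\<^bsub>G2\<^esub> (c + x) = h [^]\<^bsub>G2\<^esub> (c + y)"
        then have "h [^]\<^bsub>G2\<^esub> c \<otimes>\<^bsub>G2\<^esub> h [^]\<^bsub>G2\<^esub> x = h [^]\<^bsub>G2\<^esub> c \<otimes>\<^bsub>G2\<^esub> h [^]\<^bsub>G2\<^esub> y"
          using hc by (simp add: g2.nat_pow_mult)
        then have "h [^]\<^bsub>G2\<^esub> x = h [^]\<^bsub>G2\<^esub> y" using hc by simp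
        then have "x mod p = y mod p" using pow_eq_iff_mod[OF g2.is_group hc] oh p0 by simp
        then show "x = y" using \<open>x \<in> {..<p}\<close> \<open>y \<in> {..<p}\<close> by simp
      qed
      have sub: "(\<lambda>r. h [^]\<^bsub>G2\<^esub> (c + r)) ` {..<p} \<subseteq> carrier G2" using hc by auto
      have "card ((\<lambda>r. h [^]\<^bsub>G2\<^esub> (c + r)) ` {..<p}) = p" using card_image[OF inj] by simp
      then have img: "(\<lambda>r. h [^]\<^bsub>G2\<^esub> (c + r)) ` {..<p} = carrier G2"
        using sub fin2 by (metis card_subset_eq)
      show ?thesis using map_pmf_of_set_inj[OF inj] p0 img by auto
    qed
    have ev: "(y \<otimes>\<^bsub>G1\<^esub> inv\<^bsub>G1\<^esub> (g [^]\<^bsub>G1\<^esub> r) = g [^]\<^bsub>G1\<^esub> (a * b))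
       = (e g y = h [^]\<^bsub>G2\<^esub> (a * b + r))" if y: "y \<in> carrier G1" for y and a b r :: nat
    proof -
      obtain k :: nat where k: "y = g [^]\<^bsub>G1\<^esub> k" using gen_elem[OF c1 g y] by blast
      have "(y \<otimes>\<^bsub>G1\<^esub> inv\<^bsub>G1\<^esub> (g [^]\<^bsub>G1\<^esub> r) = g [^]\<^bsub>G1\<^esub> (a * b))
          = (y = g [^]\<^bsub>G1\<^esub> (a * b) \<otimes>\<^bsub>G1\<^esub> g [^]\<^bsub>G1\<^esub> r)"
        using g1.inv_solve_right'[of "g [^]\<^bsub>G1\<^esub> (a * b)" y "g [^]\<^bsub>G1\<^esub> r"] y gc by simp
      also have "\<dots> = (g [^]\<^bsub>G1\<^esub> k = g [^]\<^bsub>G1\<^esub> (a * b + r))"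
        using gc k by (simp add: g1.nat_pow_mult)
      also have "\<dots> = (k mod p = (a * b + r) mod p)"
        using pow_eq_iff_mod[OF g1.is_group gc] og p0 by simp
      also have "\<dots> = (h [^]\<^bsub>G2\<^esub> k = h [^]\<^bsub>G2\<^esub> (a * b + r))"
        using pow_eq_iff_mod[OF g2.is_group hc] oh p0 by simp
      finally show ?thesis using k eg by simp
    qed
    have step: "map_pmf (\<lambda>z. z = g [^]\<^bsub>G1\<^esub> (a * b))
          (apply_wrapper G1 G2 p e theW A g (g [^]\<^bsub>G1\<^esub> a) (g [^]\<^bsub>G1\<^esub> b))
        = bind_pmf (pmf_of_set (carrier G2)) (\<lambda>x. map_pmf (\<lambda>y. e g y = x) (A g x))" for a b :: nat
    proof -
      have ab: "e (g [^]\<^bsub>G1\<^esub> a) (g [^]\<^bsub>G1\<^esub> b) \<otimes>\<^bsub>G2\<^esub> h [^]\<^bsub>G2\<^esub> r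
           = h [^]\<^bsub>G2\<^esub> (a * b + r)" for r :: nat
        using bil[OF gc gc, of a b] hc h_def by (simp add: g2.nat_pow_mult)
      have "map_pmf (\<lambda>z. z = g [^]\<^bsub>G1\<^esub> (a * b))
          (apply_wrapper G1 G2 p e theW A g (g [^]\<^bsub>G1\<^esub> a) (g [^]\<^bsub>G1\<^esub> b))
        = bind_pmf (Pi_pmf {..<Suc 0} 0 (\<lambda>_. pmf_of_set {..<p})) (\<lambda>r.
            map_pmf (\<lambda>y. y \<otimes>\<^bsub>G1\<^esub> inv\<^bsub>G1\<^esub> (g [^]\<^bsub>G1\<^esub> r 0) = g [^]\<^bsub>G1\<^esub> (a * b))
              (A g (h [^]\<^bsub>G2\<^esub> (a * b + r 0))))"
        unfolding apply_wrapper_def theW_def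
        using ab by (simp add: map_bind_pmf pmf.map_comp o_def h_def)
      also have "\<dots> = bind_pmf (pmf_of_set {..<p}) (\<lambda>r.
            map_pmf (\<lambda>y. y \<otimes>\<^bsub>G1\<^esub> inv\<^bsub>G1\<^esub> (g [^]\<^bsub>G1\<^esub> r) = g [^]\<^bsub>G1\<^esub> (a * b))
              (A g (h [^]\<^bsub>G2\<^esub> (a * b + r))))"
        by (rule Pi_bind1)
      also have "\<dots> = bind_pmf (pmf_of_set {..<p}) (\<lambda>r.
            map_pmf (\<lambda>y. e g y = h [^]\<^bsub>G2\<^esub> (a * b + r))
              (A g (h [^]\<^bsub>G2\<^esub> (a * b + r))))"
      proof (rule bind_pmf_cong[OF refl], rule map_pmf_cong[OF refl])
        fix r y assume "y \<in> set_pmf (A g (h [^]\<^bsub>G2\<^esub> (a * b + r)))"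
        then have "y \<in> carrier G1" using v gc hc unfolding ow_valid_def by blast
        then show "(y \<otimes>\<^bsub>G1\<^esub> inv\<^bsub>G1\<^esub> (g [^]\<^bsub>G1\<^esub> r) = g [^]\<^bsub>G1\<^esub> (a * b))
           = (e g y = h [^]\<^bsub>G2\<^esub> (a * b + r))" by (rule ev)
      qed
      also have "\<dots> = bind_pmf (map_pmf (\<lambda>r. h [^]\<^bsub>G2\<^esub> (a * b + r)) (pmf_of_set {..<p}))
           (\<lambda>x. map_pmf (\<lambda>y. e g y = x) (A g x))"
        by (simp add: bind_map_pmf)
      also have "\<dots> = bind_pmf (pmf_of_set (carrier G2)) (\<lambda>x. map_pmf (\<lambda>y. e g y = x) (A g x))"
        by (simp add: unif)
      finally show ?thesis .
    qed
    show ?thesis by (simp add: step)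
  qed
  show ?thesis unfolding cdh_success_def ow_success_def
    by (rule arg_cong[where f="\<lambda>M. measure_pmf.prob M {True}"], rule bind_pmf_cong[OF refl])
       (use c1 in \<open>auto simp: key cyclic_of_prime_order_def generators_def
          intro: finite_subset[of _ "carrier G1"]\<close>)
qed

theorem propositionC1:
  fixes G1 :: "'a monoid" and G2 :: "'b monoid" and p :: nat
    and e :: "'a \<Rightarrow> 'a \<Rightarrow> 'b"
    and time_cdh :: "'a cdh_adversary \<Rightarrow> real"
    and time_ow :: "('a, 'b) ow_adversary \<Rightarrow> real"
  assumes "cryptographic_pairing G1 G2 p e"
    and "wrapper_overhead_bounded G1 G2 p e time_cdh time_ow"
  shows "\<exists>c :: real. \<forall>t \<epsilon>.
           cdh_assumption G1 p time_cdh t \<epsilon> \<longrightarrow> one_way_pairing G1 G2 e time_ow (t - c) \<epsilon>"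
proof -
  obtain c where c: "\<And>A. time_cdh (apply_wrapper G1 G2 p e theW A) \<le> time_ow A + c"
    using assms(2) unfolding wrapper_overhead_bounded_def by blast
  show ?thesis
  proof (intro exI[of _ c] allI impI)
    fix t \<epsilon> assume h: "cdh_assumption G1 p time_cdh t \<epsilon>"
    show "one_way_pairing G1 G2 e time_ow (t - c) \<epsilon>"
      unfolding one_way_pairing_def
    proof (intro allI impI)
      fix A assume v: "ow_valid G1 G2 A" and tA: "time_ow A \<le> t - c"
      have "time_cdh (apply_wrapper G1 G2 p e theW A) \<le> t" using c[of A] tA by linarith
      then have "cdh_success G1 p (apply_wrapper G1 G2 p e theW A) < \<epsilon>"
        using h unfolding cdh_assumption_def by blast
      then show "ow_success G1 G2 e A < \<epsilon>" using success_eq[OF assms(1) v] by simp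
    qed
  qed
qed

end
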